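(* Let $\varphi=\forall x_1\exists y_1\cdots\forall x_k\exists y_k\,P$ be a positive Horn sentence over a finite relational signature $\sigma$ with $P$ a conjunction of equality-free atomic $\sigma$-formulas, and let $\alpha$ be a positive integer or $\omega$. For every finite substructure $\mathcal{A}$ of $\mathcal{T}_\varphi(C_\alpha)$ (with domain $A$) there is a constant-conservative homomorphism from $\mathcal{A}$ to $\mathcal{T}^{|A|}_\varphi(C_\alpha)$.
   Context: Let $f_1,\dots,f_k$ be new function symbols, $f_i$ of arity $i$, and $\mathrm{Sk}(\varphi)=\forall x_1\cdots\forall x_k\,P(x_1,f_1(x_1),\dots,x_k,f_k(x_1,\dots,x_k))$. $C_\alpha=\{c_1,\dots,c_\alpha\}$ (or $\{c_1,c_2,\dots\}$ if $\alpha=\omega$) are new constants, $T_\varphi(C_\alpha)$ is the set of closed terms built from $C_\alpha$ with the $f_i$, and the rank of a term is its maximal nesting depth of function symbols. $\mathcal{T}_\varphi(C_\alpha)$ is the $\sigma$-structure on $T_\varphi(C_\alpha)$ in which $R(t_1,\dots,t_p)$ holds iff it is obtained from an atom of the matrix of $\mathrm{Sk}(\varphi)$ by substituting terms of $T_\varphi(C_\alpha)$ for $x_1,\dots,x_k$. $\mathcal{T}^m_\varphi(C_\alpha)$ is the induced substructure of $\mathcal{T}_\varphi(C_\alpha)$ on terms of rank $\leq m$. A partial map $f$ on $T_\varphi(C_\alpha)$ is constant-conservative if for every $t$ in its domain, every constant occurring in $f(t)$ occurs in $t$. *)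

theory Defs
  imports Main "HOL-Library.Extended_Nat"
begin

text \<open>Closed terms: constants c_j (Cst j, j >= 1) and applications f_i(t_1,...,t_i) (App i ts).\<close>
datatype trm = Cst nat | App nat "trm list"

fun rank :: "trm \<Rightarrow> nat" where
  "rank (Cst j) = 0"
| "rank (App i ts) = Suc (Max (insert 0 (set (map rank ts))))"

fun consts_of :: "trm \<Rightarrow> nat set" where
  "consts_of (Cst j) = {j}"
| "consts_of (App i ts) = \<Union> (set (map consts_of ts))"

text \<open>T_phi(C_alpha): closed terms built from c_1..c_alpha (alpha = \<infinity> for omega)
  with f_1,...,f_k, f_i of arity i.\<close>
inductive_set terms :: "nat \<Rightarrow> enat \<Rightarrow> trm set" for k :: nat and \<alpha> :: enat where
  cst: "1 \<le> j \<Longrightarrow> enat j \<le> \<alpha> \<Longrightarrow> Cst j \<in> terms k \<alpha>"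
| app: "1 \<le> i \<Longrightarrow> i \<le> k \<Longrightarrow> length ts = i \<Longrightarrow> \<forall>t\<in>set ts. t \<in> terms k \<alpha>
        \<Longrightarrow> App i ts \<in> terms k \<alpha>"

datatype var = X nat | Y nat

text \<open>Substitution of terms t_1..t_k for x_1..x_k in the Skolemized matrix:
  x_i becomes t_i and y_i becomes f_i(t_1,...,t_i).\<close>
fun sk_subst :: "(nat \<Rightarrow> trm) \<Rightarrow> var \<Rightarrow> trm" where
  "sk_subst t (X i) = t i"
| "sk_subst t (Y i) = App i (map t [1..<Suc i])"

text \<open>The matrix P is a list of equality-free atoms (R, [v_1,..,v_p]) over a relational
  signature with arity function ar.\<close>
definition wf_matrix :: "('r \<Rightarrow> nat) \<Rightarrow> nat \<Rightarrow> ('r \<times> var list) list \<Rightarrow> bool" where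
  "wf_matrix ar k P \<longleftrightarrow> (\<forall>(R, vs) \<in> set P. length vs = ar R \<and>
      (\<forall>v \<in> set vs. case v of X i \<Rightarrow> 1 \<le> i \<and> i \<le> k | Y i \<Rightarrow> 1 \<le> i \<and> i \<le> k))"

definition T_rel :: "nat \<Rightarrow> enat \<Rightarrow> ('r \<times> var list) list \<Rightarrow> 'r \<Rightarrow> trm list \<Rightarrow> bool" where
  "T_rel k \<alpha> P R ss \<longleftrightarrow> (\<exists>vs t. (R, vs) \<in> set P \<and> (\<forall>i\<in>{1..k}. t i \<in> terms k \<alpha>)
        \<and> ss = map (sk_subst t) vs)"

text \<open>Terms of rank at most m: universe of T^m_phi(C_alpha).\<close>
definition terms_upto :: "nat \<Rightarrow> enat \<Rightarrow> nat \<Rightarrow> trm set" where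
  "terms_upto k \<alpha> m = {t \<in> terms k \<alpha>. rank t \<le> m}"

definition is_hom_to_rank :: "nat \<Rightarrow> enat \<Rightarrow> ('r \<times> var list) list \<Rightarrow> trm set \<Rightarrow> nat \<Rightarrow> (trm \<Rightarrow> trm) \<Rightarrow> bool" where
  "is_hom_to_rank k \<alpha> P A m h \<longleftrightarrow> h ` A \<subseteq> terms_upto k \<alpha> m \<and>
     (\<forall>R ss. set ss \<subseteq> A \<longrightarrow> T_rel k \<alpha> P R ss \<longrightarrow> T_rel k \<alpha> P R (map h ss))"

definition constant_conservative :: "trm set \<Rightarrow> (trm \<Rightarrow> trm) \<Rightarrow> bool" where
  "constant_conservative A h \<longleftrightarrow> (\<forall>t\<in>A. consts_of (h t) \<subseteq> consts_of t)"

end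

theory Submission
  imports Defs
begin

fun g :: "trm set \<Rightarrow> trm \<Rightarrow> trm" where
  "g A (Cst j) = Cst j"
| "g A (App i ts) = (if App i ts \<in> A then App i (map (g A) ts)
      else Cst (SOME j. j \<in> consts_of (App i ts)))"

lemma some_in: "S \<noteq> {} \<Longrightarrow> (SOME j. j \<in> S) \<in> S"
  by (simp add: some_in_eq)

lemma terms_consts: "s \<in> terms k \<alpha> \<Longrightarrow> consts_of s \<noteq> {} \<and> (\<forall>j\<in>consts_of s. 1 \<le> j \<and> enat j \<le> \<alpha>)"
proof (induction rule: terms.induct)
  case (cst j) then show ?case by simp
next
  case (app i ts)
  then have "ts \<noteq> []" by auto
  then obtain t where t: "t \<in> set ts" by (cases ts) auto
  have ne: "consts_of (App i ts) \<noteq> {}" using t app(4) by auto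
  have "\<forall>j\<in>consts_of (App i ts). 1 \<le> j \<and> enat j \<le> \<alpha>"
  proof
    fix j assume "j \<in> consts_of (App i ts)"
    then obtain u where "u \<in> set ts" "j \<in> consts_of u" by auto
    then show "1 \<le> j \<and> enat j \<le> \<alpha>" using app(4) by blast
  qed
  with ne show ?case by blast
qed

lemma g_cons: "s \<in> terms k \<alpha> \<Longrightarrow> consts_of (g A s) \<subseteq> consts_of s"
proof (induction rule: terms.induct)
  case (cst j) then show ?case by simp
next
  case (app i ts)
  show ?case
  proof (cases "App i ts \<in> A")
    case True
    have "consts_of (g A (App i ts)) = (\<Union>t\<in>set ts. consts_of (g A t))" using True by simp
    also have "\<dots> \<subseteq> (\<Union>t\<in>set ts. consts_of t)" using app(4) by blast
    finally show ?thesis by simp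
  next
    case False
    have t: "App i ts \<in> terms k \<alpha>" by (rule terms.app) (use app in auto)
    have "g A (App i ts) = Cst (SOME j. j \<in> consts_of (App i ts))"
      by (simp only: g.simps if_not_P[OF False])
    then have "consts_of (g A (App i ts)) \<subseteq> {SOME j. j \<in> consts_of (App i ts)}"
      by (simp only: consts_of.simps subset_refl)
    moreover have "(SOME j. j \<in> consts_of (App i ts)) \<in> consts_of (App i ts)"
      using some_in[OF conjunct1[OF terms_consts[OF t]]] .
    ultimately show ?thesis by blast
  qed
qed

lemma g_terms: "s \<in> terms k \<alpha> \<Longrightarrow> g A s \<in> terms k \<alpha>"
proof (induction rule: terms.induct)
  case (cst j) then show ?case by (simp add: terms.cst)
next
  case (app i ts)
  show ?case
  proof (cases "App i ts \<in> A")
    case True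
    have "g A (App i ts) = App i (map (g A) ts)" using True by simp
    moreover have "App i (map (g A) ts) \<in> terms k \<alpha>"
      by (rule terms.app) (use app in auto)
    ultimately show ?thesis by simp
  next
    case False
    have t: "App i ts \<in> terms k \<alpha>" by (rule terms.app) (use app in auto)
    have "(SOME j. j \<in> consts_of (App i ts)) \<in> consts_of (App i ts)"
      using some_in[OF conjunct1[OF terms_consts[OF t]]] .
    then have "1 \<le> (SOME j. j \<in> consts_of (App i ts)) \<and> enat (SOME j. j \<in> consts_of (App i ts)) \<le> \<alpha>"
      using terms_consts[OF t] by blast
    then have "Cst (SOME j. j \<in> consts_of (App i ts)) \<in> terms k \<alpha>" by (blast intro: terms.cst)
    moreover have "g A (App i ts) = Cst (SOME j. j \<in> consts_of (App i ts))"
      by (simp only: g.simps if_not_P[OF False])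
    ultimately show ?thesis by simp
  qed
qed

lemma rank_child: "t \<in> set ts \<Longrightarrow> rank t < rank (App i ts)"
  by (simp add: less_Suc_eq_le)

lemma g_rank: "finite A \<Longrightarrow> rank (g A s) \<le> card {u\<in>A. rank u \<le> rank s}"
proof (induction s)
  case (Cst x) then show ?case by simp
next
  case (App i ts)
  show ?case
  proof (cases "App i ts \<in> A")
    case False then show ?thesis by simp
  next
    case True
    let ?S = "{u\<in>A. rank u \<le> rank (App i ts)}"
    have fin: "finite ?S" using App.prems by simp
    have "\<forall>t\<in>set ts. rank (g A t) < card ?S"
    proof
      fix t assume t: "t \<in> set ts"
      have "{u\<in>A. rank u \<le> rank t} \<subset> ?S"
      proof
        show "{u\<in>A. rank u \<le> rank t} \<subseteq> ?S" using rank_child[OF t, of i] by auto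
        have "App i ts \<notin> {u\<in>A. rank u \<le> rank t}" using rank_child[OF t, of i] by auto
        then show "{u\<in>A. rank u \<le> rank t} \<noteq> ?S" using True by blast
      qed
      then have "card {u\<in>A. rank u \<le> rank t} < card ?S" using fin by (rule psubset_card_mono[rotated])
      then show "rank (g A t) < card ?S" using App.IH[OF t App.prems] by linarith
    qed
    moreover have "card ?S > 0" using fin True by (auto simp: card_gt_0_iff)
    ultimately show ?thesis using True
      by (auto simp: Suc_le_eq)
  qed
qed

theorem mainTheorem13:
  fixes ar :: "'r::finite \<Rightarrow> nat"
    and k :: nat and \<alpha> :: enat
    and P :: "('r \<times> var list) list"
    and A :: "trm set"
  assumes "wf_matrix ar k P"
    and "1 \<le> \<alpha>"
    and "finite A"
    and "A \<subseteq> terms k \<alpha>"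
  shows "\<exists>h. is_hom_to_rank k \<alpha> P A (card A) h \<and> constant_conservative A h"
proof (intro exI conjI)
  show "constant_conservative A (g A)"
    unfolding constant_conservative_def using g_cons assms(4) by blast
  show "is_hom_to_rank k \<alpha> P A (card A) (g A)"
    unfolding is_hom_to_rank_def
  proof (intro conjI allI impI)
    show "g A ` A \<subseteq> terms_upto k \<alpha> (card A)"
    proof
      fix x assume "x \<in> g A ` A"
      then obtain s where s: "s \<in> A" "x = g A s" by auto
      have "rank x \<le> card {u\<in>A. rank u \<le> rank s}" using g_rank[OF assms(3)] s by simp
      also have "\<dots> \<le> card A" using assms(3) by (intro card_mono) auto
      finally show "x \<in> terms_upto k \<alpha> (card A)"
        using s assms(4) g_terms unfolding terms_upto_def by blast
    qed
  next
    fix R ss assume ss: "set ss \<subseteq> A" and r: "T_rel k \<alpha> P R ss"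
    then obtain vs t where vs: "(R, vs) \<in> set P" "\<forall>i\<in>{1..k}. t i \<in> terms k \<alpha>"
      "ss = map (sk_subst t) vs" unfolding T_rel_def by blast
    have "map (g A) ss = map (sk_subst (g A \<circ> t)) vs"
    proof -
      have "g A (sk_subst t v) = sk_subst (g A \<circ> t) v" if "v \<in> set vs" for v
      proof (cases v)
        case (X j) then show ?thesis by simp
      next
        case (Y j)
        have "sk_subst t v \<in> A" using ss vs(3) that by auto
        then show ?thesis using Y by simp
      qed
      then show ?thesis using vs(3) by simp
    qed
    moreover have "\<forall>i\<in>{1..k}. (g A \<circ> t) i \<in> terms k \<alpha>" using vs(2) g_terms by simp
    ultimately show "T_rel k \<alpha> P R (map (g A) ss)" unfolding T_rel_def using vs(1) by blast
  qed
qed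

end
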